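(* Let $\mathcal{M}, \mathcal{L} \in \mathbb{C}^{n\times n}$ and let the matrix pencil $\mathcal{M}-\lambda \mathcal{L}$ have eigenvalues $\lambda_1,\dots,\lambda_k$ satisfying \[ \mathcal{M}v_1 = \lambda_1 \mathcal{L}v_1 ,\ \dots,\ \mathcal{M}v_k = \lambda_k \mathcal{L}v_k \] for some nonzero vectors $v_1,\dots,v_k\in \mathbb{C}^n$. Let $V= [v_1, \dots ,v_k]\in\mathbb{C}^{n\times k}$, $\Lambda=\mathrm{diag}(\lambda_1,\dots,\lambda_k)$ and $\widehat{\Lambda}=\mathrm{diag}(\hat{\lambda}_1,\dots,\hat{\lambda}_k)\in \mathbb{C}^{k\times k}$ for some $\hat{\lambda}_1,\dots,\hat{\lambda}_k \in \mathbb{C}$. If $R_1, R_2\in \mathbb{C}^{n\times k}$ satisfy \[ R_1^{\top}V =\widehat{\Lambda}-\Lambda \quad\text{and}\quad R_2^{\top}V =0, \] then the eigenvalues of the matrix pencil \[ \widehat{\mathcal{M}}-\lambda \widehat{\mathcal{L}} := (\mathcal{M}+\mathcal{L}VR_1^{\top})-\lambda (\mathcal{L}+\mathcal{M}VR_2^{\top}) \] consist of those of $\mathcal{M}-\lambda \mathcal{L}$, except that the eigenvalues $\lambda_1,\dots,\lambda_k$ of $\mathcal{M}-\lambda \mathcal{L}$ are replaced by $\hat{\lambda}_1,\dots,\hat{\lambda}_k$. Moreover, $\hat{\lambda}_1,\dots,\hat{\lambda}_k$ are eigenvalues of $\widehat{\mathcal{M}}-\lambda\widehat{\mathcal{L}}$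 corresponding to the eigenvectors $v_1,\dots,v_k$, respectively, i.e. $\widehat{\mathcal{M}}v_j=\hat{\lambda}_j\widehat{\mathcal{L}}v_j$ for $j=1,\dots,k$.
   Context: For square matrices $\mathcal{M},\mathcal{L}$, a scalar $\mu$ is an eigenvalue of the pencil $\mathcal{M}-\lambda\mathcal{L}$ if $\det(\mathcal{M}-\mu\mathcal{L})=0$, with a corresponding eigenvector being a nonzero $v$ with $\mathcal{M}v=\mu\mathcal{L}v$; eigenvalues are counted with multiplicity as roots of $\det(\mathcal{M}-\lambda\mathcal{L})$. *)

theory Defs
  imports "HOL-Analysis.Analysis" "HOL-Computational_Algebra.Polynomial"
begin

definition pencil_poly :: "complex^'n^'n \<Rightarrow> complex^'n^'n \<Rightarrow> complex poly" where
  "pencil_poly M L = det (\<chi> i j. [: M$i$j, - (L$i$j) :])"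

text \<open>Eigenvalues of the pencil M - x L, counted with multiplicity as roots of det(M - x L)
  (meaningful when this polynomial is nonzero).\<close>
definition pencil_eigs :: "complex^'n^'n \<Rightarrow> complex^'n^'n \<Rightarrow> complex multiset" where
  "pencil_eigs M L = proots (pencil_poly M L)"

end

theory Submission
  imports Defs
begin


lemma row_axis_in_span:
  fixes c :: "'n::finite \<Rightarrow> 'a::field"
  shows "(\<Sum>r\<in>UNIV-{i}. c r *s axis r 1) \<in> vec.span {row j (mat 1 :: 'a^'n^'n) |j. j \<noteq> i}"
  apply (rule vec.span_sum)
  apply (rule vec.span_scale)
  apply (rule vec.span_base)
  apply (auto simp: row_def mat_def axis_def vec_eq_iff)
  done

lemma det_Z0:
  fixes w :: "'a::field^'n::finite"
  shows "det (\<chi> r. if r = i then w else axis r 1) = w$i"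
proof -
  let ?A = "(\<chi> k. if k = i then (w$i) *s axis i 1 else axis k 1) :: 'a^'n^'n"
  have rA: "row k ?A = (if k = i then (w$i) *s axis i 1 else axis k 1)" for k
    by (simp add: row_def vec_lambda_eta)
  have "det ?A = w$i * det (\<chi> k. if k = i then axis i 1 else axis k 1 :: 'a^'n^'n)"
    by (rule det_row_mul[of i "w$i" "\<lambda>k. axis i 1" "\<lambda>k. axis k 1"])
  also have "(\<chi> k. if k = i then axis i 1 else axis k 1 :: 'a^'n^'n) = mat 1"
    by (auto simp: vec_eq_iff mat_def axis_def)
  finally have dA: "det ?A = w$i" by simp
  let ?x = "(\<Sum>r\<in>UNIV-{i}. w$r *s axis r 1)"
  have sp: "?x \<in> vec.span {row j ?A |j. j \<noteq> i}"
    apply (rule vec.span_sum)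
    apply (rule vec.span_scale)
    apply (rule vec.span_base)
    apply (auto simp: rA)
    done
  have wexp: "w = (w$i) *s axis i 1 + ?x"
    using basis_expansion[of w] sum.remove[of UNIV i "\<lambda>r. w$r *s axis r 1"] by simp
  then have "(\<chi> r. if r = i then w else axis r 1) = (\<chi> k. if k = i then row i ?A + ?x else row k ?A)"
    unfolding rA by (simp add: wexp[symmetric] cong: if_cong)
  then show ?thesis using det_row_span[OF sp] dA by simp
qed

lemma mult_if01 [simp]: "(b::'a::semiring_1) * (if P then 1 else 0) = (if P then b else 0)"
  by simp

lemma row_mat1: "row k (mat 1 :: 'a::zero_neq_one^'n^'n) = axis k 1"
  by (auto simp: row_def mat_def axis_def vec_eq_iff)

lemma det_E:
  fixes c :: "'n::finite \<Rightarrow> 'a::field"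
  shows "det ((\<chi> r. if r = i then axis i 1 else axis r 1 + c r *s axis i 1) :: 'a^'n^'n) = 1"
proof -
  let ?E = "(\<chi> r. if r = i then axis i 1 else axis r 1 + c r *s axis i 1) :: 'a^'n^'n"
  let ?x = "(\<Sum>r\<in>UNIV-{i}. c r *s axis r 1) :: 'a^'n"
  have xc: "?x $ r = (if r = i then 0 else c r)" for r
    by (auto simp: sum_component axis_def sum.delta')
  have "transpose ?E = (\<chi> k. if k = i then row i (mat 1) + ?x else row k (mat 1))"
    unfolding row_mat1 by (auto simp: vec_eq_iff transpose_def axis_def sum.delta')
  then have "det (transpose ?E) = det (mat 1 :: 'a^'n^'n)"
    using det_row_span[OF row_axis_in_span[of c i]] by simp
  then show ?thesis by simp
qed

lemma det_Z:
  fixes w :: "'a::field^'n::finite"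
  shows "det (\<chi> r. if r = i then w else axis r 1 + c r *s w) = w$i"
proof -
  let ?E = "(\<chi> r. if r = i then axis i 1 else axis r 1 + c r *s axis i 1) :: 'a^'n^'n"
  let ?Z0 = "(\<chi> r. if r = i then w else axis r 1) :: 'a^'n^'n"
  have "(\<chi> r. if r = i then w else axis r 1 + c r *s w) = ?E ** ?Z0"
  proof -
    have d1: "(if P then 1 else 0) * (y::'a) = (if P then y else 0)" for P y by simp
    have d2: "(if P then (1::'a) else 0) + b * (if Q then 1 else 0) = (if P then 1 else 0) + (if Q then b else 0)" for P Q b by simp
    have d4: "(if P then (b::'a) else 0) * y = (if P then b * y else 0)" for P b y by simp
    show ?thesis
      by (auto simp: vec_eq_iff matrix_matrix_mult_def axis_def d1 d2 d4 distrib_right sum.distrib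
          cong: if_cong)
  qed
  then show ?thesis by (simp add: det_mul det_E det_Z0)
qed




lemma det_rank1_aux:
  fixes a w :: "'a::field^'n::finite"
  assumes "finite T"
  shows "det ((\<chi> r. if r \<in> T then axis r 1 + a$r *s w else axis r 1) :: 'a^'n^'n)
         = 1 + (\<Sum>i\<in>T. a$i * w$i)"
  using assms
proof (induction T rule: finite_induct)
  case empty
  have "((\<chi> r. axis r 1) :: 'a^'n^'n) = mat 1"
    by (auto simp: vec_eq_iff mat_def axis_def)
  then show ?case by simp
next
  case (insert i T)
  define QT where "QT = (\<lambda>r. if r \<in> T then axis r 1 + a$r *s w else axis r 1 :: 'a^'n)"
  have e1: "((\<chi> r. if r \<in> insert i T then axis r 1 + a$r *s w else axis r 1) :: 'a^'n^'n)
      = (\<chi> r. if r = i then axis r 1 + a$r *s w else QT r)"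
    by (auto simp: vec_eq_iff QT_def)
  have e2: "((\<chi> r. if r = i then axis r 1 else QT r) :: 'a^'n^'n) = (\<chi> r. QT r)"
    using insert by (auto simp: vec_eq_iff QT_def)
  have e3: "((\<chi> r. if r = i then w else QT r) :: 'a^'n^'n)
     = (\<chi> r. if r = i then w else axis r 1 + (if r \<in> T then a$r else 0) *s w)"
    by (auto simp: vec_eq_iff QT_def)
  have "det ((\<chi> r. if r = i then axis r 1 + a$r *s w else QT r) :: 'a^'n^'n)
     = det ((\<chi> r. if r = i then axis r 1 else QT r) :: 'a^'n^'n)
       + det ((\<chi> r. if r = i then a$r *s w else QT r) :: 'a^'n^'n)"
    by (rule det_row_add)
  also have "((\<chi> r. if r = i then a$r *s w else QT r) :: 'a^'n^'n)
      = (\<chi> r. if r = i then a$i *s w else QT r)"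
    by (auto simp: vec_eq_iff)
  also have "det \<dots> = a$i * det ((\<chi> r. if r = i then w else QT r) :: 'a^'n^'n)"
    by (rule det_row_mul)
  finally show ?case
    using insert unfolding e1 e2 e3 det_Z by (simp add: QT_def)
qed

definition outer :: "'a::times^'n \<Rightarrow> 'a^'m \<Rightarrow> 'a^'m^'n" where
  "outer a w = (\<chi> i j. a$i * w$j)"

lemma det_rank1:
  fixes a w :: "'a::field^'n::finite"
  shows "det (mat 1 + outer a w) = 1 + (\<Sum>r\<in>UNIV. w$r * a$r)"
proof -
  have "mat 1 + outer a w = ((\<chi> r. if r \<in> UNIV then axis r 1 + a$r *s w else axis r 1) :: 'a^'n^'n)"
    by (auto simp: vec_eq_iff mat_def axis_def outer_def)
  then show ?thesis using det_rank1_aux[of UNIV a w] by (simp add: mult.commute)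
qed

lemma sum_mat_vec: "(sum f S) *v (x::'a::comm_semiring_1^'n) = sum (\<lambda>i. f i *v x) S"
  by (induction S rule: infinite_finite_induct) (auto simp: matrix_vector_mult_add_rdistrib)

lemma outer_vec: "outer a w *v (b::'a::comm_semiring_1^'n) = (\<Sum>r\<in>UNIV. w$r * b$r) *s a"
  by (auto simp: vec_eq_iff outer_def matrix_vector_mult_def sum_distrib_left mult_ac)

lemma mult_outer: "(X::'a::comm_semiring_1^'n^'m) ** outer a w = outer (X *v a) w"
  by (auto simp: vec_eq_iff outer_def matrix_vector_mult_def matrix_matrix_mult_def sum_distrib_left mult_ac)

lemma det_prod_rank1:
  fixes a w :: "'k \<Rightarrow> 'a::field^'n::finite"
  assumes orth: "\<And>i j. i \<noteq> j \<Longrightarrow> (\<Sum>r\<in>UNIV. w i $ r * a j $ r) = 0"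
    and "finite S"
  shows "det (mat 1 + (\<Sum>j\<in>S. outer (a j) (w j))) = (\<Prod>j\<in>S. 1 + (\<Sum>r\<in>UNIV. w j $ r * a j $ r))"
  using assms(2)
proof (induction S rule: finite_induct)
  case empty
  then show ?case by simp
next
  case (insert j S)
  have va: "(mat 1 + (\<Sum>i\<in>S. outer (a i) (w i))) *v a j = a j"
  proof -
    have "outer (a i) (w i) *v a j = 0" if "i \<in> S" for i
      using that insert orth[of i j] by (auto simp: outer_vec)
    then show ?thesis by (simp add: matrix_vector_mult_add_rdistrib sum_mat_vec)
  qed
  have "mat 1 + (\<Sum>i\<in>insert j S. outer (a i) (w i))
      = (mat 1 + (\<Sum>i\<in>S. outer (a i) (w i))) ** (mat 1 + outer (a j) (w j))"
  proof -
    have "(mat 1 + (\<Sum>i\<in>S. outer (a i) (w i))) ** (mat 1 + outer (a j) (w j))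
       = (mat 1 + (\<Sum>i\<in>S. outer (a i) (w i))) + outer (a j) (w j)"
      by (simp only: matrix_add_ldistrib matrix_mul_rid mult_outer va)
    then show ?thesis using insert by (simp add: add_ac)
  qed
  then show ?case using insert by (simp add: det_mul det_rank1)
qed




lemma mat_mult_sum: "(A::'a::comm_semiring_1^'n^'m) ** sum f S = sum (\<lambda>j. A ** f j) S"
  by (induction S rule: infinite_finite_induct) (auto simp: matrix_add_ldistrib)

lemma key:
  fixes M L :: "complex^'n::finite^'n"
    and V R1 R2 :: "complex^'k::finite^'n"
    and lam lamh :: "'k \<Rightarrow> complex"
  assumes eig: "\<forall>j. M *v column j V = lam j *s (L *v column j V)"
    and R1: "transpose R1 ** V = (\<chi> i j. if i = j then lamh i - lam i else 0)"
    and R2: "transpose R2 ** V = 0"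
    and x: "\<forall>j. lam j \<noteq> x"
  shows "det (\<chi> i j. (M + L ** V ** transpose R1)$i$j - x * (L + M ** V ** transpose R2)$i$j)
           * (\<Prod>j\<in>UNIV. lam j - x)
         = det (\<chi> i j. M$i$j - x * L$i$j) * (\<Prod>j\<in>UNIV. lamh j - x)"
proof -
  define A where "A = (\<chi> i j. M$i$j - x * L$i$j)"
  define B where "B = (\<chi> i j. (M + L ** V ** transpose R1)$i$j - x * (L + M ** V ** transpose R2)$i$j)"
  define a where "a = (\<lambda>j. (1 / (lam j - x)) *s column j V)"
  define w where "w = (\<lambda>j. column j R1 - (x * lam j) *s column j R2)"
  have EIG: "(\<Sum>r\<in>UNIV. M$i$r * V$r$j) = lam j * (\<Sum>r\<in>UNIV. L$i$r * V$r$j)" for i j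
  proof -
    have "(M *v column j V)$i = (lam j *s (L *v column j V))$i" using eig by simp
    then show ?thesis by (simp add: matrix_vector_mult_def column_def)
  qed
  have Av: "A *v column j V = (lam j - x) *s (L *v column j V)" for j
  proof -
    have "(A *v column j V)$i = ((lam j - x) *s (L *v column j V))$i" for i
      using EIG[of i j]
      by (simp add: A_def matrix_vector_mult_def column_def sum_subtractf sum_distrib_left
          algebra_simps)
    then show ?thesis by (simp add: vec_eq_iff)
  qed
  have Aa: "A *v a j = L *v column j V" for j
  proof -
    have "(1/(lam j - x)) * (lam j - x) = 1" using x by simp
    then show ?thesis by (simp only: a_def vector_scalar_commute Av vector_smult_assoc vector_smult_lid)
  qed
  have B1: "B = A + (\<Sum>j\<in>UNIV. outer (L *v column j V) (w j))"
  proof -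
    define LV where "LV = (\<lambda>i j. (\<Sum>r\<in>UNIV. L$i$r * V$r$j))"
    have e1: "(L ** V ** transpose R1)$i$k = (\<Sum>j\<in>UNIV. LV i j * R1$k$j)" for i k
      by (simp add: LV_def matrix_matrix_mult_def transpose_def)
    have e2: "(M ** V ** transpose R2)$i$k = (\<Sum>j\<in>UNIV. lam j * LV i j * R2$k$j)" for i k
      by (simp add: LV_def matrix_matrix_mult_def transpose_def EIG)
    have e3: "(\<Sum>j\<in>UNIV. outer (L *v column j V) (w j) $i$k)
        = (\<Sum>j\<in>UNIV. LV i j * (R1$k$j - x * lam j * R2$k$j))" for i k
      by (simp add: LV_def outer_def w_def matrix_vector_mult_def column_def sum_component)
    show ?thesis
      by (simp add: vec_eq_iff B_def A_def e1 e2 e3 algebra_simps sum_subtractf sum_distrib_left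
          sum.distrib)
  qed
  have B2: "B = A ** (mat 1 + (\<Sum>j\<in>UNIV. outer (a j) (w j)))"
    unfolding B1 by (simp add: matrix_add_ldistrib mat_mult_sum mult_outer Aa)
  have WA: "(\<Sum>r\<in>UNIV. w i $ r * a j $ r) = (if i = j then lamh i - lam i else 0) / (lam j - x)" for i j
  proof -
    have s1: "(\<Sum>r\<in>UNIV. w i $ r * a j $ r) = (\<Sum>r\<in>UNIV. w i $ r * V$r$j) / (lam j - x)"
      by (simp add: a_def column_def sum_divide_distrib)
    have s2: "(\<Sum>r\<in>UNIV. w i $ r * V$r$j)
        = (transpose R1 ** V)$i$j - x * lam i * (transpose R2 ** V)$i$j"
      by (simp add: w_def matrix_matrix_mult_def transpose_def column_def sum_subtractf
          sum_distrib_left algebra_simps)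
    show ?thesis unfolding s1 s2 by (simp add: R1 R2)
  qed
  have "det B = det A * (\<Prod>j\<in>UNIV. 1 + (\<Sum>r\<in>UNIV. w j $ r * a j $ r))"
    unfolding B2 det_mul by (subst det_prod_rank1) (auto simp: WA)
  also have "(\<Prod>j\<in>UNIV. 1 + (\<Sum>r\<in>UNIV. w j $ r * a j $ r)) = (\<Prod>j\<in>UNIV. (lamh j - x) / (lam j - x))"
  proof (intro prod.cong refl)
    fix j
    have "lam j - x \<noteq> 0" using x by auto
    then show "1 + (\<Sum>r\<in>UNIV. w j $ r * a j $ r) = (lamh j - x) / (lam j - x)"
      unfolding WA by (simp add: field_simps)
  qed
  finally have dB: "det B = det A * (\<Prod>j\<in>UNIV. (lamh j - x) / (lam j - x))" .
  have "(\<Prod>j\<in>UNIV. (lamh j - x) / (lam j - x)) * (\<Prod>j\<in>UNIV. lam j - x)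
      = (\<Prod>j\<in>UNIV. (lamh j - x) / (lam j - x) * (lam j - x))"
    by (simp only: prod.distrib)
  also have "\<dots> = (\<Prod>j\<in>UNIV. lamh j - x)"
    using x by (intro prod.cong) auto
  finally have "det B * (\<Prod>j\<in>UNIV. lam j - x) = det A * (\<Prod>j\<in>UNIV. lamh j - x)"
    unfolding dB by (simp add: mult.assoc)
  then show ?thesis unfolding A_def B_def .
qed




lemma poly_pencil: "poly (pencil_poly M L) x = det (\<chi> i j. M$i$j - x * L$i$j)"
  unfolding pencil_poly_def det_def by (simp add: poly_sum poly_prod)

lemma sum_single_mset: "finite A \<Longrightarrow> (\<Sum>x\<in>A. {#f x#}) = image_mset f (mset_set A)"
  by (induction A rule: finite_induct) auto

lemma col_mult: "column j (A ** B) = A *v column j B"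
  by (simp add: vec_eq_iff column_def matrix_matrix_mult_def matrix_vector_mult_def)

lemma V_axis: "(V::'a::semiring_1^'k^'n) *v axis j 1 = column j V"
  by (simp add: vec_eq_iff column_def matrix_vector_mult_def axis_def)

theorem theorem6:
  fixes M L :: "complex^'n^'n"
    and V R1 R2 :: "complex^'k^'n"
    and lam lamh :: "'k \<Rightarrow> complex"
  assumes nz: "\<forall>j. column j V \<noteq> 0"
    and eig: "\<forall>j. M *v column j V = lam j *s (L *v column j V)"
    and R1: "transpose R1 ** V = (\<chi> i j. if i = j then lamh i - lam i else 0)"
    and R2: "transpose R2 ** V = 0"
  shows "(\<forall>j. (M + L ** V ** transpose R1) *v column j V
              = lamh j *s ((L + M ** V ** transpose R2) *v column j V))
    \<and> (pencil_poly M L \<noteq> 0 \<and> image_mset lam (mset_set UNIV) \<subseteq># pencil_eigs M L \<longrightarrow>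
         pencil_poly (M + L ** V ** transpose R1) (L + M ** V ** transpose R2) \<noteq> 0 \<and>
         pencil_eigs (M + L ** V ** transpose R1) (L + M ** V ** transpose R2)
           = pencil_eigs M L - image_mset lam (mset_set UNIV) + image_mset lamh (mset_set UNIV))"
proof (rule conjI[OF allI impI])
  fix j
  have c1: "transpose R1 *v column j V = (lamh j - lam j) *s axis j 1"
  proof -
    have "transpose R1 *v column j V = column j (transpose R1 ** V)"
      by (simp only: col_mult)
    then show ?thesis unfolding R1 by (auto simp: vec_eq_iff column_def axis_def)
  qed
  have c2: "transpose R2 *v column j V = 0"
  proof -
    have "transpose R2 *v column j V = column j (transpose R2 ** V)"
      by (simp only: col_mult)
    then show ?thesis unfolding R2 by (auto simp: vec_eq_iff column_def)
  qed
  have "(M + L ** V ** transpose R1) *v column j V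
      = M *v column j V + L *v (V *v (transpose R1 *v column j V))"
    by (simp only: matrix_vector_mult_add_rdistrib matrix_vector_mul_assoc matrix_mul_assoc)
  also have "\<dots> = lam j *s (L *v column j V) + (lamh j - lam j) *s (L *v column j V)"
    by (simp only: eig c1 vector_scalar_commute V_axis)
  also have "\<dots> = lamh j *s (L *v column j V)"
    by (simp add: vector_sadd_rdistrib[symmetric])
  also have "\<dots> = lamh j *s ((L + M ** V ** transpose R2) *v column j V)"
  proof -
    have "(L + M ** V ** transpose R2) *v column j V
      = L *v column j V + M *v (V *v (transpose R2 *v column j V))"
      by (simp only: matrix_vector_mult_add_rdistrib matrix_vector_mul_assoc matrix_mul_assoc)
    then show ?thesis by (simp only: c2 matrix_vector_mult_0_right add_0_right)
  qed
  finally show "(M + L ** V ** transpose R1) *v column j V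
              = lamh j *s ((L + M ** V ** transpose R2) *v column j V)" .
next
  assume H: "pencil_poly M L \<noteq> 0 \<and> image_mset lam (mset_set UNIV) \<subseteq># pencil_eigs M L"
  define p where "p = pencil_poly M L"
  define q where "q = pencil_poly (M + L ** V ** transpose R1) (L + M ** V ** transpose R2)"
  define PL where "PL = (\<Prod>j\<in>UNIV. [:lam j, -1:])"
  define PH where "PH = (\<Prod>j\<in>UNIV. [:lamh j, -1:])"
  have pPL: "poly PL x = (\<Prod>j\<in>UNIV. lam j - x)" for x by (simp add: PL_def poly_prod)
  have pPH: "poly PH x = (\<Prod>j\<in>UNIV. lamh j - x)" for x by (simp add: PH_def poly_prod)
  have eq: "q * PL = p * PH"
  proof (rule ccontr)
    assume ne: "q * PL \<noteq> p * PH"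
    let ?d = "q * PL - p * PH"
    have "?d \<noteq> 0" using ne by simp
    then have fin: "finite {x. poly ?d x = 0}" by (rule poly_roots_finite)
    have "UNIV - range lam \<subseteq> {x. poly ?d x = 0}"
    proof
      fix x assume "x \<in> UNIV - range lam"
      then have "\<forall>j. lam j \<noteq> x" by auto
      from key[OF eig R1 R2 this] show "x \<in> {x. poly ?d x = 0}"
        by (simp add: q_def p_def poly_pencil pPL pPH)
    qed
    with fin have "finite (UNIV - range lam)" by (rule rev_finite_subset)
    then have "finite (UNIV :: complex set)" by simp
    then show False using infinite_UNIV_char_0 by blast
  qed
  have PLnz: "PL \<noteq> 0" and PHnz: "PH \<noteq> 0" by (auto simp: PL_def PH_def)
  have pnz: "p \<noteq> 0" using H p_def by simp
  have qnz: "q \<noteq> 0" using eq pnz PHnz by auto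
  have rl: "proots [:c, -1:] = {#c#}" for c :: complex
  proof -
    have e: "[:c, -1:] = - [:-c, 1:]" by simp
    show ?thesis by (simp only: e proots_uminus proots_linear_factor minus_minus)
  qed
  have "proots PL = image_mset lam (mset_set UNIV)"
    unfolding PL_def by (subst proots_prod) (auto simp: rl sum_single_mset)
  moreover have "proots PH = image_mset lamh (mset_set UNIV)"
    unfolding PH_def by (subst proots_prod) (auto simp: rl sum_single_mset)
  moreover have "proots q + proots PL = proots p + proots PH"
    using eq by (metis proots_mult qnz pnz PLnz PHnz)
  ultimately have E: "proots q + image_mset lam (mset_set UNIV) = proots p + image_mset lamh (mset_set UNIV)"
    by simp
  have sub: "image_mset lam (mset_set UNIV) \<subseteq># proots p" using H by (simp add: p_def pencil_eigs_def)
  have "proots q = proots p - image_mset lam (mset_set UNIV) + image_mset lamh (mset_set UNIV)"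
    using E sub by (metis add_diff_cancel_right' subset_mset.add_diff_assoc2)
  then show "pencil_poly (M + L ** V ** transpose R1) (L + M ** V ** transpose R2) \<noteq> 0 \<and>
         pencil_eigs (M + L ** V ** transpose R1) (L + M ** V ** transpose R2)
           = pencil_eigs M L - image_mset lam (mset_set UNIV) + image_mset lamh (mset_set UNIV)"
    using qnz by (simp add: q_def p_def pencil_eigs_def)
qed


end
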